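(* Let $\Pi$ be a set of policies and $\Theta^T$ a finite set of environment parameterizations, and for each $\vec\theta\in\Theta^T$ and $\pi\in\Pi$ let $U^{\vec\theta}(\pi)\in\mathbb{R}$ be the utility of $\pi$ in the environment parameterized by $\vec\theta$; assume that for each $\vec\theta$ the maximum $\max_{\pi'\in\Pi}U^{\vec\theta}(\pi')$ is attained and that the set $\textsc{MinimaxRegret}$ defined below is nonempty. Let real numbers $\mathbf{F}_{min}\le\mathbf{F}_{max}<\mathbf{S}_{min}\le\mathbf{S}_{max}$ satisfy $\mathbf{S}_{max}-\mathbf{S}_{min}<\mathbf{S}_{min}-\mathbf{F}_{max}$ and $\mathbf{F}_{max}-\mathbf{F}_{min}<\mathbf{S}_{min}-\mathbf{F}_{max}$, and suppose that every achievable utility satisfies $U^{\vec\theta}(\pi)\in[\mathbf{F}_{min},\mathbf{F}_{max}]\cup[\mathbf{S}_{min},\mathbf{S}_{max}]$ for all $\pi\in\Pi$, $\vec\theta\in\Theta^T$. Say $\pi$ succeeds on $\vec\theta$ if $U^{\vec\theta}(\pi)\in[\mathbf{S}_{min},\mathbf{S}_{max}]$. Suppose there exists $\pi^*\in\Pi$ such that for every $\vec\theta\in\Theta^T$, if some policy in $\Pi$ succeeds on $\vec\theta$ then $\pi^*$ succeeds on $\vec\theta$. Then every $\pi\in\textsc{MinimaxRegret}$ has the same property: for every $\vec\theta\in\Theta^T$, if some policy in $\Pi$ succeeds on $\vec\theta$, then $\pi$ succeeds on $\vec\theta$.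
   Context: Regret of a policy $\pi$ on parameterization $\vec\theta$: $\textsc{Regret}(\pi,\vec\theta)=\max_{\pi^B\in\Pi}\{U^{\vec\theta}(\pi^B)-U^{\vec\theta}(\pi)\}$. The set of minimax regret policies is $\textsc{MinimaxRegret}=\arg\min_{\pi\in\Pi}\max_{\vec\theta\in\Theta^T}\textsc{Regret}(\pi,\vec\theta)$. (In the paper, $\vec\theta$ ranges over sequences of free parameters of an underspecified POMDP, and $U^{\vec\theta}(\pi)$ is the expected discounted return of $\pi$ in the POMDP obtained by fixing those parameters.) *)

theory Defs
  imports "HOL-Analysis.Analysis"
begin

definition regret :: "'p set \<Rightarrow> ('t \<Rightarrow> 'p \<Rightarrow> real) \<Rightarrow> 'p \<Rightarrow> 't \<Rightarrow> real" where
  "regret Pols U pol th = (SUP pB\<in>Pols. U th pB - U th pol)"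

definition max_regret :: "'p set \<Rightarrow> 't set \<Rightarrow> ('t \<Rightarrow> 'p \<Rightarrow> real) \<Rightarrow> 'p \<Rightarrow> real" where
  "max_regret Pols Theta U pol = (SUP th\<in>Theta. regret Pols U pol th)"

definition minimax_regret :: "'p set \<Rightarrow> 't set \<Rightarrow> ('t \<Rightarrow> 'p \<Rightarrow> real) \<Rightarrow> 'p set" where
  "minimax_regret Pols Theta U =
     {pol \<in> Pols. \<forall>pol' \<in> Pols. max_regret Pols Theta U pol \<le> max_regret Pols Theta U pol'}"

definition succeeds :: "real \<Rightarrow> real \<Rightarrow> ('t \<Rightarrow> 'p \<Rightarrow> real) \<Rightarrow> 'p \<Rightarrow> 't \<Rightarrow> bool" where
  "succeeds Smin Smax U pol th \<longleftrightarrow> U th pol \<in> {Smin..Smax}"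

end

theory Submission
  imports Defs
begin

lemma regret_eq:
  assumes "pB \<in> Pols" "\<forall>p\<in>Pols. U th p \<le> U th pB"
  shows "regret Pols U pol th = U th pB - U th pol"
proof -
  have bdd: "bdd_above ((\<lambda>q. U th q - U th pol) ` Pols)"
    using assms by (intro bdd_aboveI[where M="U th pB - U th pol"]) auto
  have "U th pB - U th pol \<le> (SUP q\<in>Pols. U th q - U th pol)"
    using cSUP_upper[OF assms(1) bdd] .
  moreover have "(SUP q\<in>Pols. U th q - U th pol) \<le> U th pB - U th pol"
    using assms by (intro cSUP_least) auto
  ultimately show ?thesis unfolding regret_def by linarith
qed

theorem theorem1:
  fixes Pols :: "'p set" and Theta :: "'t set" and U :: "'t \<Rightarrow> 'p \<Rightarrow> real"
    and Fmin Fmax Smin Smax :: real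
  assumes fin: "finite Theta"
    and attained: "\<forall>th\<in>Theta. \<exists>pB\<in>Pols. \<forall>p\<in>Pols. U th p \<le> U th pB"
    and mmr_ne: "minimax_regret Pols Theta U \<noteq> {}"
    and ord: "Fmin \<le> Fmax" "Fmax < Smin" "Smin \<le> Smax"
    and gapS: "Smax - Smin < Smin - Fmax"
    and gapF: "Fmax - Fmin < Smin - Fmax"
    and range: "\<forall>th\<in>Theta. \<forall>p\<in>Pols. U th p \<in> {Fmin..Fmax} \<union> {Smin..Smax}"
    and star: "\<exists>pstar\<in>Pols. \<forall>th\<in>Theta.
                 (\<exists>p\<in>Pols. succeeds Smin Smax U p th) \<longrightarrow> succeeds Smin Smax U pstar th"
  shows "\<forall>pol\<in>minimax_regret Pols Theta U. \<forall>th\<in>Theta.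
           (\<exists>p\<in>Pols. succeeds Smin Smax U p th) \<longrightarrow> succeeds Smin Smax U pol th"
proof (intro ballI impI, rule ccontr)
  fix pol th
  assume pol: "pol \<in> minimax_regret Pols Theta U" and th: "th \<in> Theta"
    and ex: "\<exists>p\<in>Pols. succeeds Smin Smax U p th"
    and nsucc: "\<not> succeeds Smin Smax U pol th"
  obtain pstar where ps: "pstar \<in> Pols" and psS: "\<forall>th\<in>Theta.
                 (\<exists>p\<in>Pols. succeeds Smin Smax U p th) \<longrightarrow> succeeds Smin Smax U pstar th"
    using star by blast
  have polP: "pol \<in> Pols" and le: "max_regret Pols Theta U pol \<le> max_regret Pols Theta U pstar"
    using pol ps unfolding minimax_regret_def by auto
  obtain pB where pB: "pB \<in> Pols" "\<forall>p\<in>Pols. U th p \<le> U th pB" using attained th by blast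
  obtain p where p: "p \<in> Pols" "succeeds Smin Smax U p th" using ex by blast
  have "U th pol \<le> Fmax" using range th polP nsucc unfolding succeeds_def by auto
  moreover have "U th p \<ge> Smin" using p unfolding succeeds_def by auto
  ultimately have r1: "regret Pols U pol th \<ge> Smin - Fmax"
    using regret_eq[of pB Pols U th pol, OF pB] pB p by fastforce
  have bddr: "bdd_above ((\<lambda>t. regret Pols U pol t) ` Theta)"
    using fin by simp
  have "regret Pols U pol th \<le> max_regret Pols Theta U pol"
    unfolding max_regret_def using cSUP_upper[OF th bddr] .
  have bound: "\<forall>t\<in>Theta. regret Pols U pstar t \<le> max (Smax - Smin) (Fmax - Fmin)"
  proof
    fix t assume t: "t \<in> Theta"
    obtain qB where qB: "qB \<in> Pols" "\<forall>p\<in>Pols. U t p \<le> U t qB" using attained t by blast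
    show "regret Pols U pstar t \<le> max (Smax - Smin) (Fmax - Fmin)"
    proof (cases "succeeds Smin Smax U qB t")
      case True
      hence "succeeds Smin Smax U pstar t" using psS t qB by blast
      moreover have "U t qB \<le> Smax" using range t qB ord by fastforce
      ultimately show ?thesis using regret_eq[of qB Pols U t pstar, OF qB] unfolding succeeds_def by auto
    next
      case False
      hence "U t qB \<le> Fmax" using range t qB unfolding succeeds_def by auto
      moreover have "U t pstar \<ge> Fmin" using range t ps ord by fastforce
      ultimately show ?thesis using regret_eq[of qB Pols U t pstar, OF qB] by auto
    qed
  qed
  have "max_regret Pols Theta U pstar \<le> max (Smax - Smin) (Fmax - Fmin)"
    unfolding max_regret_def using th bound by (intro cSUP_least) auto
  thus False using le r1 \<open>regret Pols U pol th \<le> _\<close> gapS gapF by linarith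
qed

end
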